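(* Let $Q>1$ and $\epsilon>0$. Let $(X,d,\mu)$ be a $Q$-doubling metric measure space. Let $u:X\to\mathbb{R}$ be integrable on balls and let $g\in L^Q(X)$, $g\ge0$, be such that there exist constants $C>0$ and $\lambda\ge1$ with $$\frac{1}{\mu(B)}\int_B |u-u_B|\,d\mu\le C\,\operatorname{diam}(B)\left(\frac{1}{\mu(\lambda B)}\int_{\lambda B} g^Q\,d\mu\right)^{1/Q}$$ for every open ball $B\subset X$, where $u_B=\frac{1}{\mu(B)}\int_B u\,d\mu$. Then there is a set $E_\epsilon\subset X$ with $H^h(E_\epsilon)=0$, where $h(t)=\log^{-Q-\epsilon}(1/t)$, such that for every $x\in X\setminus E_\epsilon$ the limit $\lim_{r\to0}\frac{1}{\mu(B(x,r))}\int_{B(x,r)}u\,d\mu$ exists.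
   Context: $\mu$ is a Borel regular outer measure on $(X,d)$. $\mu$ is doubling if every ball has positive finite measure and $\mu(B(x,2r))\le C_\mu\mu(B(x,r))$ for all $x,r$. $(X,d,\mu)$ is $Q$-doubling if $\mu$ is doubling and there is $C\ge1$ with $(s/r)^Q\le C\,\mu(B(x,s))/\mu(B(a,r))$ whenever $a\in X$, $x\in B(a,r)$, $0<s\le r$. For $B=B(x,r)$, $\lambda B=B(x,\lambda r)$. $H^h(E)=\limsup_{\delta\to0}\inf\{\sum_i h(\operatorname{diam}(B_i)): E\subset\bigcup_i B_i,\ \operatorname{diam}(B_i)\le\delta\}$. *)

theory Defs
  imports "HOL-Analysis.Analysis"
begin

definition doubling_measure :: "'a::metric_space measure \<Rightarrow> bool" where
  "doubling_measure M \<longleftrightarrow>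
     (\<forall>x r. r > 0 \<longrightarrow> 0 < emeasure M (ball x r) \<and> emeasure M (ball x r) < \<infinity>) \<and>
     (\<exists>C. \<forall>x r. r > 0 \<longrightarrow> measure M (ball x (2 * r)) \<le> C * measure M (ball x r))"

definition Q_doubling :: "real \<Rightarrow> 'a::metric_space measure \<Rightarrow> bool" where
  "Q_doubling Q M \<longleftrightarrow> doubling_measure M \<and>
     (\<exists>C\<ge>1. \<forall>a x r s. x \<in> ball a r \<and> 0 < s \<and> s \<le> r \<longrightarrow>
        (s / r) powr Q \<le> C * measure M (ball x s) / measure M (ball a r))"

definition avg :: "'a measure \<Rightarrow> 'a set \<Rightarrow> ('a \<Rightarrow> real) \<Rightarrow> real" where
  "avg M B u = (LINT y:B|M. u y) / measure M B"

text \<open>Finite covers are included since the empty set is a ball (of nonpositive radius)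
  with diameter 0, and h 0 = 0 for the gauges used here.\<close>
definition hausdorff_h :: "(real \<Rightarrow> real) \<Rightarrow> 'a::metric_space set \<Rightarrow> ennreal" where
  "hausdorff_h h E = Limsup (at_right (0::real)) (\<lambda>\<delta>.
     INF B \<in> {B :: nat \<Rightarrow> 'a set. (\<forall>i. \<exists>x r. B i = ball x r) \<and> E \<subseteq> (\<Union>i. B i)
                 \<and> (\<forall>i. diameter (B i) \<le> \<delta>)}.
       (\<Sum>i. ennreal (h (diameter (B i)))))"

text \<open>The gauge h(t) = log^(-Q-eps)(1/t) for 0 < t < 1, extended by h(t) = 0 for t \<le> 0
  (its limit at 0); the value for t \<ge> 1 is irrelevant as delta tends to 0.\<close>
definition log_gauge :: "real \<Rightarrow> real \<Rightarrow> real \<Rightarrow> real" where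
  "log_gauge Q \<epsilon> t = (if t \<le> 0 then 0 else if t < 1 then ln (1 / t) powr (- Q - \<epsilon>) else 1)"

end

theory Submission
  imports Defs "HOL-Analysis.Analysis"
begin

lemma hausdorff_zeroI:
  fixes E :: "'a::metric_space set"
  assumes H: "\<And>\<delta> \<eta>. \<delta> > 0 \<Longrightarrow> \<eta> > 0 \<Longrightarrow> \<exists>B::nat \<Rightarrow> 'a set. (\<forall>i. \<exists>x r. B i = ball x r) \<and> E \<subseteq> (\<Union>i. B i)
        \<and> (\<forall>i. diameter (B i) \<le> \<delta>) \<and> (\<Sum>i. ennreal (h (diameter (B i)))) \<le> ennreal \<eta>"
  shows "hausdorff_h h E = 0"
proof -
  have z: "(INF B \<in> {B :: nat \<Rightarrow> 'a set. (\<forall>i. \<exists>x r. B i = ball x r) \<and> E \<subseteq> (\<Union>i. B i)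
                 \<and> (\<forall>i. diameter (B i) \<le> \<delta>)}.
       (\<Sum>i. ennreal (h (diameter (B i))))) = 0" if "\<delta> > 0" for \<delta>
  proof -
    have "(INF B \<in> {B :: nat \<Rightarrow> 'a set. (\<forall>i. \<exists>x r. B i = ball x r) \<and> E \<subseteq> (\<Union>i. B i)
                 \<and> (\<forall>i. diameter (B i) \<le> \<delta>)}.
       (\<Sum>i. ennreal (h (diameter (B i))))) \<le> 0 + ennreal \<eta>" if "\<eta> > 0" for \<eta>
    proof -
      obtain B where B: "(\<forall>i. \<exists>x r. B i = ball x r) \<and> E \<subseteq> (\<Union>i. B i)
        \<and> (\<forall>i. diameter (B i) \<le> \<delta>)" "(\<Sum>i. ennreal (h (diameter (B i)))) \<le> ennreal \<eta>"
        using H[OF \<open>\<delta> > 0\<close> \<open>\<eta> > 0\<close>] by blast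
      show ?thesis by (rule order_trans[OF INF_lower[of B]]) (use B in auto)
    qed
    then show ?thesis by (meson ennreal_le_epsilon le_zero_eq)
  qed
  have "hausdorff_h h E = Limsup (at_right (0::real)) (\<lambda>_. 0::ennreal)"
    unfolding hausdorff_h_def
    by (rule Limsup_eq, rule eventually_mono[OF eventually_at_right_less[of 0]]) (use z in auto)
  also have "\<dots> = 0" by (rule Limsup_const) simp
  finally show ?thesis .
qed

lemma integrable_ind_mult:
  fixes f :: "'a \<Rightarrow> real"
  shows "A \<in> sets M \<Longrightarrow> integrable M f \<Longrightarrow> integrable M (\<lambda>x. indicator A x * f x)"
  using integrable_mult_indicator[of A M f] by simp

lemma sum_disjoint_balls:
  fixes M :: "'a::metric_space measure" and f :: "'a \<Rightarrow> real"
  assumes "integrable M f" "\<And>x. f x \<ge> 0" "sets borel \<subseteq> sets M"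
    and "finite F" and sep: "\<And>a b. a \<in> F \<Longrightarrow> b \<in> F \<Longrightarrow> a \<noteq> b \<Longrightarrow> 2*t \<le> dist a b"
  shows "(\<Sum>c\<in>F. LINT y:ball c t|M. f y) \<le> integral\<^sup>L M f"
proof -
  have meas: "ball c t \<in> sets M" for c using assms(3) by auto
  have "(\<Sum>c\<in>F. LINT y:ball c t|M. f y) = (\<Sum>c\<in>F. \<integral>y. indicator (ball c t) y * f y \<partial>M)"
    by (simp add: set_lebesgue_integral_def)
  also have "\<dots> = \<integral>y. (\<Sum>c\<in>F. indicator (ball c t) y * f y) \<partial>M"
    using assms(1) meas by (subst Bochner_Integration.integral_sum) (auto intro!: integrable_ind_mult)
  also have "\<dots> \<le> integral\<^sup>L M f"
  proof (rule integral_mono)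
    show "integrable M (\<lambda>y. \<Sum>c\<in>F. indicator (ball c t) y * f y)"
      using assms(1) meas by (auto intro!: integrable_ind_mult)
    show "integrable M f" by fact
    fix y
    have "(\<Sum>c\<in>F. indicator (ball c t) y * f y) = real (card {c\<in>F. y \<in> ball c t}) * f y"
      using assms(4) by (simp add: sum_distrib_right[symmetric] indicator_def sum.If_cases Int_def conj_commute)
    moreover have "card {c\<in>F. y \<in> ball c t} \<le> 1"
    proof -
      have fin: "finite {c\<in>F. y \<in> ball c t}" using assms(4) by auto
      have "\<forall>a\<in>{c \<in> F. y \<in> ball c t}. \<forall>b\<in>{c \<in> F. y \<in> ball c t}. a = b"
      proof (intro ballI, rule ccontr)
        fix a b assume ab: "a \<in> {c \<in> F. y \<in> ball c t}" "b \<in> {c \<in> F. y \<in> ball c t}" "a \<noteq> b"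
        then have "2*t \<le> dist a b" using sep by auto
        moreover have "dist a b \<le> dist a y + dist b y" by (metis dist_commute dist_triangle)
        ultimately show False using ab by (auto simp: dist_commute)
      qed
      then show ?thesis using card_le_Suc0_iff_eq[OF fin] by simp
    qed
    ultimately show "(\<Sum>c\<in>F. indicator (ball c t) y * f y) \<le> f y"
      using assms(2)[of y] mult_right_mono[of "real (card {c\<in>F. y \<in> ball c t})" 1 "f y"] by simp
  qed
  finally show ?thesis .
qed

lemma sep_cover:
  fixes M :: "'a::metric_space measure" and f :: "'a \<Rightarrow> real"
  assumes "integrable M f" "\<And>x. f x \<ge> 0" "sets borel \<subseteq> sets M"
    and "\<theta> > 0" "t > 0" and A: "\<And>x. x \<in> A \<Longrightarrow> \<theta> \<le> (LINT y:ball x t|M. f y)"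
  shows "\<exists>F. finite F \<and> F \<subseteq> A \<and> real (card F) * \<theta> \<le> integral\<^sup>L M f \<and> A \<subseteq> (\<Union>c\<in>F. ball c (2*t))"
proof -
  define P where "P F \<longleftrightarrow> finite F \<and> F \<subseteq> A \<and> (\<forall>a\<in>F. \<forall>b\<in>F. a \<noteq> b \<longrightarrow> 2*t \<le> dist a b)" for F
  have bnd: "real (card F) * \<theta> \<le> integral\<^sup>L M f" if "P F" for F
  proof -
    have "real (card F) * \<theta> = (\<Sum>c\<in>F. \<theta>)" by simp
    also have "\<dots> \<le> (\<Sum>c\<in>F. LINT y:ball c t|M. f y)"
      by (rule sum_mono) (use that A in \<open>auto simp: P_def\<close>)
    also have "\<dots> \<le> integral\<^sup>L M f"
      by (rule sum_disjoint_balls) (use assms that in \<open>auto simp: P_def\<close>)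
    finally show ?thesis .
  qed
  have "\<forall>y. P y \<longrightarrow> card y < nat \<lceil>integral\<^sup>L M f / \<theta>\<rceil> + 1"
  proof (intro allI impI)
    fix F assume "P F"
    then have "real (card F) \<le> integral\<^sup>L M f / \<theta>" using bnd \<open>\<theta> > 0\<close> by (simp add: field_simps)
    then show "card F < nat \<lceil>integral\<^sup>L M f / \<theta>\<rceil> + 1" by linarith
  qed
  moreover have "P {}" by (simp add: P_def)
  ultimately obtain F where F: "P F" "\<And>F'. P F' \<Longrightarrow> card F' \<le> card F"
    using ex_has_greatest_nat[of P "{}" card] by blast
  have "A \<subseteq> (\<Union>c\<in>F. ball c (2*t))"
  proof
    fix x assume x: "x \<in> A"
    show "x \<in> (\<Union>c\<in>F. ball c (2*t))"
    proof (rule ccontr)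
      assume nx: "x \<notin> (\<Union>c\<in>F. ball c (2*t))"
      then have xF: "x \<notin> F" using \<open>t > 0\<close> by auto
      have "P (insert x F)" using F(1) x nx unfolding P_def by (auto simp: dist_commute)
      then have "card (insert x F) \<le> card F" by (rule F(2))
      moreover have "card (insert x F) = Suc (card F)" using xF F(1) by (simp add: P_def)
      ultimately show False by simp
    qed
  qed
  then show ?thesis using F(1) bnd by (auto simp: P_def)
qed

lemma diameter_ball_le:
  fixes x :: "'a::metric_space"
  assumes "r \<ge> 0"
  shows "diameter (ball x r) \<le> 2 * r"
proof (cases "ball x r = {}")
  case True then show ?thesis using assms by simp
next
  case False
  have "(SUP p\<in>ball x r \<times> ball x r. case p of (a, b) \<Rightarrow> dist a b) \<le> 2 * r"
  proof (rule cSUP_least)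
    show "ball x r \<times> ball x r \<noteq> {}" using False by simp
    fix p assume "p \<in> ball x r \<times> ball x r"
    then obtain a b where p: "p = (a,b)" "dist x a < r" "dist x b < r" by auto
    have "dist a b \<le> dist x a + dist x b" by (metis dist_commute dist_triangle)
    then show "(case p of (a, b) \<Rightarrow> dist a b) \<le> 2 * r" using p by simp
  qed
  then show ?thesis using False by (simp add: diameter_def)
qed

lemma log_gauge_nonneg: "log_gauge Q \<epsilon> t \<ge> 0"
  by (simp add: log_gauge_def)

lemma log_gauge_mono:
  assumes "Q + \<epsilon> > 0" "0 \<le> a" "a \<le> b" "b < 1"
  shows "log_gauge Q \<epsilon> a \<le> log_gauge Q \<epsilon> b"
proof (cases "a = 0")
  case True then show ?thesis using log_gauge_nonneg[of Q \<epsilon> b] by (simp add: log_gauge_def)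
next
  case False
  then have a: "a > 0" using assms by simp
  have "ln (1/b) \<le> ln (1/a)" using a assms by (simp add: frac_le)
  moreover have "ln (1/b) > 0" using a assms by simp
  ultimately have "ln (1/a) powr (-Q-\<epsilon>) \<le> ln (1/b) powr (-Q-\<epsilon>)"
    using assms by (intro powr_mono2') auto
  then show ?thesis using a assms by (simp add: log_gauge_def)
qed

lemma gauge_bound:
  fixes Q \<epsilon> lam :: real
  assumes "Q > 0" "\<epsilon> > 0" "lam \<ge> 1" "real (2^j) \<ge> 4 * ln (4*lam)"
  shows "4 * (lam * (1/2)^(2^j)) < 1"
    and "log_gauge Q \<epsilon> (4 * (lam * (1/2)^(2^j))) \<le> 4 powr (Q+\<epsilon>) * 2 powr (-(Q+\<epsilon>) * real j)"
proof -
  define N :: nat where "N = 2^j"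
  have N: "real N \<ge> 4 * ln (4*lam)" using assms N_def by simp
  have Npos: "real N > 0" by (simp add: N_def)
  have lnl: "ln (4*lam) > 0" using assms by simp
  have eq: "1 / (4 * (lam * (1/2)^N)) = 2^N / (4*lam)"
    by (simp add: field_simps power_one_over)
  have L: "ln (1 / (4 * (lam * (1/2)^N))) = real N * ln 2 - ln (4*lam)"
    unfolding eq using assms by (simp add: ln_div ln_realpow)
  have "real N * ln 2 \<ge> real N * (2/3)" using ln2_ge_two_thirds Npos by simp
  then have Lb: "ln (1 / (4 * (lam * (1/2)^N))) \<ge> real N / 4" using L N by linarith
  then have Lpos: "ln (1 / (4 * (lam * (1/2)^N))) > 0" using Npos by linarith
  have tpos: "4 * (lam * (1/2)^N) > 0" using assms by simp
  then have "1 / (4 * (lam * (1/2)^N)) > 1" using Lpos by (metis ln_less_zero_iff not_less ln_gt_zero_imp_gt_one tpos zero_less_divide_1_iff)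
  then show t1: "4 * (lam * (1/2)^(2^j)) < 1" using tpos unfolding N_def by (simp add: field_simps)
  have "log_gauge Q \<epsilon> (4 * (lam * (1/2)^N)) = ln (1 / (4 * (lam * (1/2)^N))) powr (-Q-\<epsilon>)"
    using tpos t1 by (simp add: log_gauge_def N_def)
  also have "\<dots> \<le> (real N / 4) powr (-Q-\<epsilon>)"
    using Lb Npos assms by (intro powr_mono2') auto
  also have "\<dots> = real N powr (-Q-\<epsilon>) * 4 powr (Q+\<epsilon>)"
    using Npos by (simp add: powr_divide powr_minus divide_simps powr_add[symmetric])
  also have "real N powr (-Q-\<epsilon>) = 2 powr (-(Q+\<epsilon>) * real j)"
    by (simp add: N_def powr_realpow[symmetric] powr_powr mult.commute)
  finally show "log_gauge Q \<epsilon> (4 * (lam * (1/2)^(2^j))) \<le> 4 powr (Q+\<epsilon>) * 2 powr (-(Q+\<epsilon>) * real j)"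
    by (simp add: N_def mult.commute)
qed

lemma exceptional_null:
  fixes M :: "'a::metric_space measure" and f :: "'a \<Rightarrow> real" and Q \<epsilon> lam :: real
  assumes fi: "integrable M f" and fnn: "\<And>x. f x \<ge> 0" and sb: "sets borel \<subseteq> sets M"
    and Q: "Q > 0" and eps: "\<epsilon> > 0" and lam: "lam \<ge> 1"
  shows "hausdorff_h (log_gauge Q \<epsilon>)
     {x. \<exists>\<^sub>F j in sequentially. 2 powr (-(Q+\<epsilon>/2) * real j) \<le> (LINT y:ball x (lam * (1/2)^(2^j))|M. f y)} = 0"
    (is "hausdorff_h _ ?E = 0")
proof -
  define t where "t j = lam * (1/2::real)^(2^j)" for j :: nat
  define \<theta> where "\<theta> j = 2 powr (-(Q+\<epsilon>/2) * real j)" for j :: nat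
  define G where "G = integral\<^sup>L M f"
  define A where "A j = {x. \<theta> j \<le> (LINT y:ball x (t j)|M. f y)}" for j
  have tpos: "t j > 0" for j using lam by (simp add: t_def)
  have \<theta>pos: "\<theta> j > 0" for j by (simp add: \<theta>_def)
  have "\<forall>j. \<exists>F. finite F \<and> F \<subseteq> A j \<and> real (card F) * \<theta> j \<le> G \<and> A j \<subseteq> (\<Union>c\<in>F. ball c (2*t j))"
  proof
    fix j show "\<exists>F. finite F \<and> F \<subseteq> A j \<and> real (card F) * \<theta> j \<le> G \<and> A j \<subseteq> (\<Union>c\<in>F. ball c (2*t j))"
      unfolding G_def by (rule sep_cover[OF fi fnn sb \<theta>pos tpos]) (simp add: A_def)
  qed
  from choice[OF this] obtain F where F0: "\<forall>j. finite (F j) \<and> F j \<subseteq> A j \<and> real (card (F j)) * \<theta> j \<le> G \<and> A j \<subseteq> (\<Union>c\<in>F j. ball c (2*t j))"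
    by blast
  have F: "\<And>j. finite (F j)" "\<And>j. F j \<subseteq> A j" "\<And>j. real (card (F j)) * \<theta> j \<le> G"
      "\<And>j. A j \<subseteq> (\<Union>c\<in>F j. ball c (2*t j))" using F0 by simp_all
  have "\<forall>j. \<exists>e. bij_betw e {0..<card (F j)} (F j)"
    using F(1) ex_bij_betw_nat_finite by blast
  from choice[OF this] obtain e where e: "\<And>j. bij_betw (e j) {0..<card (F j)} (F j)" by blast
  define w where "w j = 4 powr (Q+\<epsilon>) * G * (2 powr (-(\<epsilon>/2))) ^ j" for j
  have summw: "summable w"
    unfolding w_def by (rule summable_mult, rule summable_geometric) (use eps powr_less_mono[of "-(\<epsilon>/2)" 0 2] in simp)
  have Gnn: "G \<ge> 0" unfolding G_def using fnn by simp
  have wnn: "w j \<ge> 0" for j using Gnn by (simp add: w_def)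
  have cardb: "real (card (F j)) * log_gauge Q \<epsilon> (4 * t j) \<le> w j"
    if "real (2^j) \<ge> 4 * ln (4*lam)" for j
  proof -
    have g: "log_gauge Q \<epsilon> (4 * t j) \<le> 4 powr (Q+\<epsilon>) * 2 powr (-(Q+\<epsilon>) * real j)"
      using gauge_bound(2)[OF Q eps lam that] by (simp add: t_def)
    have c: "real (card (F j)) \<le> G / \<theta> j" using F(3)[of j] \<theta>pos[of j] by (simp add: field_simps)
    have "real (card (F j)) * log_gauge Q \<epsilon> (4 * t j) \<le> (G / \<theta> j) * (4 powr (Q+\<epsilon>) * 2 powr (-(Q+\<epsilon>) * real j))"
      using c g log_gauge_nonneg Gnn \<theta>pos by (intro mult_mono) auto
    also have "\<dots> = 4 powr (Q+\<epsilon>) * G * (2 powr (-(Q+\<epsilon>) * real j) / \<theta> j)" by simp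
    also have "2 powr (-(Q+\<epsilon>) * real j) / \<theta> j = (2 powr (-(\<epsilon>/2))) ^ j"
      unfolding \<theta>_def by (simp add: powr_diff[symmetric] powr_power algebra_simps)
    finally show ?thesis by (simp add: w_def)
  qed
  show ?thesis
  proof (rule hausdorff_zeroI)
    fix \<delta> \<eta> :: real assume \<delta>: "\<delta> > 0" and \<eta>: "\<eta> > 0"
    obtain J1 where J1: "(1/2::real)^J1 < \<delta> / (4*lam)"
      using real_arch_pow_inv[of "\<delta> / (4*lam)" "1/2::real"] \<delta> lam by auto
    obtain J2 where J2: "\<forall>n\<ge>J2. norm (\<Sum>i. w (i + n)) < \<eta>"
      using suminf_exist_split[OF \<eta> summw] by blast
    define J where "J = max (max J1 J2) (nat \<lceil>4 * ln (4*lam)\<rceil>)"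
    have Jlog: "real (2^j) \<ge> 4 * ln (4*lam)" if "j \<ge> J" for j
    proof -
      have "4 * ln (4*lam) \<le> real J" unfolding J_def by linarith
      also have "\<dots> \<le> real j" using that by simp
      also have "\<dots> \<le> real (2^j)" using less_exp[of j] by linarith
      finally show ?thesis .
    qed
    have Jt: "4 * t j \<le> \<delta>" if "j \<ge> J" for j
    proof -
      have "J1 \<le> j" using that by (simp add: J_def)
      then have "J1 \<le> 2^j" using less_exp[of j] by linarith
      then have "(1/2::real)^(2^j) \<le> (1/2)^J1"
        by (intro power_decreasing) auto
      then have "4 * t j \<le> 4 * lam * (1/2)^J1" using lam by (simp add: t_def)
      also have "\<dots> \<le> \<delta>" using J1 lam by (simp add: field_simps)
      finally show ?thesis .
    qed
    have Jt1: "4 * t j < 1" if "j \<ge> J" for j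
      using gauge_bound(1)[OF Q eps lam Jlog[OF that]] by (simp add: t_def)
    define B where "B n = (case prod_decode n of (j, i) \<Rightarrow>
        if i < card (F (j+J)) then ball (e (j+J) i) (2 * t (j+J)) else {})" for n
    define v where "v p = (case p of (j, i) \<Rightarrow>
        if i < card (F (j+J)) then log_gauge Q \<epsilon> (4 * t (j+J)) else 0)" for p
    show "\<exists>B::nat \<Rightarrow> 'a set. (\<forall>i. \<exists>x r. B i = ball x r) \<and> ?E \<subseteq> (\<Union>i. B i)
        \<and> (\<forall>i. diameter (B i) \<le> \<delta>) \<and> (\<Sum>i. ennreal (log_gauge Q \<epsilon> (diameter (B i)))) \<le> ennreal \<eta>"
    proof (intro exI[of _ B] conjI allI)
      fix n
      show "\<exists>x r. B n = ball x r"
      proof -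
        have e0: "\<exists>x r. ({}::'a set) = ball x r" by (metis ball_eq_empty order_refl)
        show ?thesis unfolding B_def using e0 by (auto split: prod.splits)
      qed
    next
      show "?E \<subseteq> (\<Union>i. B i)"
      proof
        fix x assume "x \<in> ?E"
        then obtain j where j: "j \<ge> J" "x \<in> A j"
          unfolding frequently_sequentially A_def \<theta>_def t_def by auto
        then obtain c where c: "c \<in> F j" "x \<in> ball c (2 * t j)" using F(4)[of j] by auto
        then obtain i where i: "i < card (F j)" "e j i = c"
          using e[of j] c(1) unfolding bij_betw_def by (metis atLeastLessThan_iff imageE)
        have "B (prod_encode (j - J, i)) = ball c (2 * t j)"
          using j i by (simp add: B_def)
        then show "x \<in> (\<Union>i. B i)" using c by blast
      qed
    next
      fix n
      obtain j i where p: "prod_decode n = (j, i)" by (cases "prod_decode n")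
      show "diameter (B n) \<le> \<delta>"
      proof (cases "i < card (F (j+J))")
        case True
        then have "B n = ball (e (j+J) i) (2 * t (j+J))" by (simp add: B_def p)
        then have "diameter (B n) \<le> 2 * (2 * t (j+J))"
          using diameter_ball_le[of "2 * t (j+J)" "e (j+J) i"] tpos[of "j+J"] by simp
        then show ?thesis using Jt[of "j+J"] by simp
      next
        case False then show ?thesis using \<delta> by (simp add: B_def p)
      qed
    next
      have pw: "ennreal (log_gauge Q \<epsilon> (diameter (B n))) \<le> ennreal (v (prod_decode n))" for n
      proof -
        obtain j i where p: "prod_decode n = (j, i)" by (cases "prod_decode n")
        show ?thesis
        proof (cases "i < card (F (j+J))")
          case True
          then have Bn: "B n = ball (e (j+J) i) (2 * t (j+J))" by (simp add: B_def p)
          then have d: "diameter (B n) \<le> 4 * t (j+J)"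
            using diameter_ball_le[of "2 * t (j+J)" "e (j+J) i"] tpos[of "j+J"] by simp
          show ?thesis
          proof (cases "diameter (B n) \<le> 0")
            case True
            then show ?thesis using log_gauge_nonneg by (simp add: log_gauge_def v_def p)
          next
            case False
            then have "log_gauge Q \<epsilon> (diameter (B n)) \<le> log_gauge Q \<epsilon> (4 * t (j+J))"
              using Q eps d Jt1[of "j+J"] by (intro log_gauge_mono) auto
            then show ?thesis using True by (simp add: v_def p ennreal_leI)
          qed
        next
          case False then show ?thesis by (simp add: B_def v_def p log_gauge_def)
        qed
      qed
      have inner: "(\<Sum>i. ennreal (v (j, i))) \<le> ennreal (w (j+J))" for j
      proof -
        have "(\<Sum>i. ennreal (v (j, i))) = (\<Sum>i<card (F (j+J)). ennreal (v (j, i)))"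
          by (rule suminf_finite) (auto simp: v_def)
        also have "\<dots> = ennreal (real (card (F (j+J))) * log_gauge Q \<epsilon> (4 * t (j+J)))"
          using log_gauge_nonneg by (simp add: v_def ennreal_of_nat_eq_real_of_nat ennreal_mult)
        also have "\<dots> \<le> ennreal (w (j+J))"
          using cardb[OF Jlog[of "j+J"]] by (simp add: ennreal_leI)
        finally show ?thesis .
      qed
      have "(\<Sum>n. ennreal (log_gauge Q \<epsilon> (diameter (B n)))) \<le> (\<Sum>n. ennreal (v (prod_decode n)))"
        by (intro suminf_le pw summableI)
      also have "\<dots> = (\<Sum>j. \<Sum>i. ennreal (v (j, i)))"
        by (rule suminf_ennreal_2dimen) simp
      also have "\<dots> \<le> (\<Sum>j. ennreal (w (j+J)))"
        by (intro suminf_le inner summableI)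
      also have "\<dots> = ennreal (\<Sum>j. w (j+J))"
        using wnn summable_ignore_initial_segment[OF summw] by (rule suminf_ennreal2)
      also have "\<dots> \<le> ennreal \<eta>"
      proof (rule ennreal_leI)
        have "norm (\<Sum>j. w (j+J)) < \<eta>" using J2 by (simp add: J_def)
        then show "(\<Sum>j. w (j+J)) \<le> \<eta>" by simp
      qed
      finally show "(\<Sum>i. ennreal (log_gauge Q \<epsilon> (diameter (B i)))) \<le> ennreal \<eta>" .
    qed
  qed
qed

lemma set_integrable_const_fin:
  fixes c :: real
  shows "A \<in> sets M \<Longrightarrow> emeasure M A < \<infinity> \<Longrightarrow> set_integrable M A (\<lambda>_. c)"
  unfolding set_integrable_def using integrable_indicator[of A M c] by simp

lemma set_integral_mono_set_nonneg:
  fixes f :: "_ \<Rightarrow> real"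
  assumes "set_integrable M A f" "B \<in> sets M" "B \<subseteq> A" "\<And>x. x \<in> A \<Longrightarrow> f x \<ge> 0"
  shows "(LINT x:B|M. f x) \<le> (LINT x:A|M. f x)"
proof -
  have iB: "set_integrable M B f" by (rule set_integrable_subset[OF assms(1-3)])
  show ?thesis
    unfolding set_lebesgue_integral_def
  proof (rule integral_mono)
    show "integrable M (\<lambda>x. indicator B x *\<^sub>R f x)" using iB by (simp add: set_integrable_def)
    show "integrable M (\<lambda>x. indicator A x *\<^sub>R f x)" using assms(1) by (simp add: set_integrable_def)
    fix x show "indicator B x *\<^sub>R f x \<le> indicator A x *\<^sub>R f x"
      using assms(3) assms(4)[of x] by (auto simp: indicator_def)
  qed
qed

lemma avg_diff_bound:
  fixes M :: "'a::metric_space measure" and u :: "'a \<Rightarrow> real"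
  assumes sb: "sets borel \<subseteq> sets M"
    and fin: "\<And>r. r > 0 \<Longrightarrow> 0 < emeasure M (ball x r) \<and> emeasure M (ball x r) < \<infinity>"
    and ui: "\<And>r. set_integrable M (ball x r) u"
    and s: "0 < s" "s \<le> r"
  shows "\<bar>avg M (ball x s) u - avg M (ball x r) u\<bar> \<le>
     (measure M (ball x r) / measure M (ball x s)) *
     ((LINT y:ball x r|M. \<bar>u y - avg M (ball x r) u\<bar>) / measure M (ball x r))"
proof -
  define c where "c = avg M (ball x r) u"
  define ms where "ms = measure M (ball x s)"
  define mr where "mr = measure M (ball x r)"
  have mpos: "measure M (ball x \<rho>) > 0" if "\<rho> > 0" for \<rho>
    using fin[OF that] by (simp add: measure_def enn2real_positive_iff)
  have ms: "ms > 0" using mpos s by (simp add: ms_def)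
  have mr: "mr > 0" using mpos s by (simp add: mr_def)
  have meas: "ball x \<rho> \<in> sets M" for \<rho> using sb by auto
  have ci: "set_integrable M (ball x \<rho>) (\<lambda>_. c)" if "\<rho> > 0" for \<rho>
    using set_integrable_const_fin[OF meas] fin[OF that] by auto
  have ci0: "set_integrable M (ball x \<rho>) (\<lambda>_. c)" for \<rho>
  proof (cases "\<rho> > 0")
    case True then show ?thesis by (rule ci)
  next
    case False then have e: "ball x \<rho> = {}" by simp
    show ?thesis unfolding e by (rule set_integrable_empty)
  qed
  have "(LINT y:ball x s|M. u y - c) = (LINT y:ball x s|M. u y) - ms * c"
  proof -
    have "emeasure M (ball x s) \<noteq> \<infinity>" using fin[OF s(1)] by auto
    then show ?thesis
      using set_integral_diff(2)[OF ui ci0] set_integral_const[OF meas, of s c] by (simp add: ms_def)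
  qed
  then have eq: "avg M (ball x s) u - c = (LINT y:ball x s|M. u y - c) / ms"
    using ms by (simp add: avg_def ms_def field_simps)
  have iabs: "set_integrable M (ball x \<rho>) (\<lambda>y. \<bar>u y - c\<bar>)" for \<rho>
    using set_integrable_abs[OF set_integral_diff(1)[OF ui ci0]] by simp
  have "\<bar>LINT y:ball x s|M. u y - c\<bar> \<le> (LINT y:ball x s|M. \<bar>u y - c\<bar>)"
    using set_integral_norm_bound[OF set_integral_diff(1)[OF ui ci0]] by simp
  also have "\<dots> \<le> (LINT y:ball x r|M. \<bar>u y - c\<bar>)"
    by (rule set_integral_mono_set_nonneg[OF iabs meas]) (use s in auto)
  finally have "\<bar>avg M (ball x s) u - c\<bar> \<le> (LINT y:ball x r|M. \<bar>u y - c\<bar>) / ms"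
    unfolding eq using ms by (simp add: abs_div divide_right_mono)
  also have "\<dots> = (mr / ms) * ((LINT y:ball x r|M. \<bar>u y - c\<bar>) / mr)"
    using mr ms by (simp add: field_simps)
  finally show ?thesis by (simp add: c_def mr_def ms_def)
qed

lemma set_int_nonneg:
  fixes f :: "_ \<Rightarrow> real"
  assumes "\<And>x. f x \<ge> 0"
  shows "(LINT x:A|M. f x) \<ge> 0"
  unfolding set_lebesgue_integral_def
  by (rule Bochner_Integration.integral_nonneg) (use assms in \<open>auto simp: indicator_def\<close>)

lemma step_bound:
  fixes M :: "'a::metric_space measure" and u g :: "'a \<Rightarrow> real" and Q C lam :: real and x :: 'a
  assumes sb: "sets borel \<subseteq> sets M" and QD: "Q_doubling Q M"
    and ui: "\<And>r. set_integrable M (ball x r) u"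
    and Q: "Q > 0" and C: "C > 0" and lam: "lam \<ge> 1" and gnn: "\<And>x. g x \<ge> 0"
    and P: "\<And>r. r > 0 \<Longrightarrow>
           (LINT y:ball x r|M. \<bar>u y - avg M (ball x r) u\<bar>) / measure M (ball x r)
           \<le> C * diameter (ball x r) *
             ((LINT y:ball x (lam * r)|M. g y powr Q) / measure M (ball x (lam * r))) powr (1 / Q)"
  shows "\<exists>K. \<forall>r s. 0 < r \<longrightarrow> r/2 \<le> s \<longrightarrow> s \<le> r \<longrightarrow> lam*r \<le> 1 \<longrightarrow>
     \<bar>avg M (ball x s) u - avg M (ball x r) u\<bar> \<le> K * (LINT y:ball x (lam*r)|M. g y powr Q) powr (1/Q)"
proof -
  have fin: "\<And>r. r > 0 \<Longrightarrow> 0 < emeasure M (ball x r) \<and> emeasure M (ball x r) < \<infinity>"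
    using QD by (simp add: Q_doubling_def doubling_measure_def)
  obtain C0 where C0: "C0 \<ge> 1" "\<And>a y r s. y \<in> ball a r \<Longrightarrow> 0 < s \<Longrightarrow> s \<le> r \<Longrightarrow>
        (s / r) powr Q \<le> C0 * measure M (ball y s) / measure M (ball a r)"
    using QD unfolding Q_doubling_def by blast
  have mpos: "measure M (ball x \<rho>) > 0" if "\<rho> > 0" for \<rho>
    using fin[OF that] by (simp add: measure_def enn2real_positive_iff)
  define m1 where "m1 = measure M (ball x 1)"
  have m1: "m1 > 0" using mpos by (simp add: m1_def)
  define K where "K = C0 * 2 powr Q * (C * 2 * (C0 / m1) powr (1/Q) / lam)"
  show ?thesis
  proof (intro exI[of _ K] allI impI)
    fix r s :: real assume r: "0 < r" and s1: "r/2 \<le> s" and s2: "s \<le> r" and lr: "lam * r \<le> 1"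
    have s: "s > 0" using r s1 by simp
    define I where "I = (LINT y:ball x (lam*r)|M. g y powr Q)"
    have I: "I \<ge> 0" unfolding I_def by (rule set_int_nonneg) simp
    define mr where "mr = measure M (ball x r)"
    define ms where "ms = measure M (ball x s)"
    define ml where "ml = measure M (ball x (lam*r))"
    have mr: "mr > 0" "ms > 0" "ml > 0" using mpos r s lam by (auto simp: mr_def ms_def ml_def)
    define Pv where "Pv = (LINT y:ball x r|M. \<bar>u y - avg M (ball x r) u\<bar>) / mr"
    have Pv0: "Pv \<ge> 0" unfolding Pv_def using mr by (intro divide_nonneg_pos set_int_nonneg) auto
    have A: "\<bar>avg M (ball x s) u - avg M (ball x r) u\<bar> \<le> (mr / ms) * Pv"
      using avg_diff_bound[OF sb fin ui s s2] by (simp add: mr_def ms_def Pv_def)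
    have xb: "x \<in> ball x \<rho>" if "\<rho> > 0" for \<rho> using that by simp
    have "(1/2) powr Q \<le> (s / r) powr Q"
      using s1 r Q by (intro powr_mono2) (auto simp: field_simps)
    also have "\<dots> \<le> C0 * ms / mr" using C0(2)[OF xb[OF r] s s2] by (simp add: ms_def mr_def)
    finally have "(1/2) powr Q \<le> C0 * ms / mr" .
    then have "mr / ms \<le> C0 * 2 powr Q"
      using mr by (simp add: powr_divide field_simps)
    then have B: "\<bar>avg M (ball x s) u - avg M (ball x r) u\<bar> \<le> (C0 * 2 powr Q) * Pv"
      using A Pv0 mult_right_mono by (metis order_trans)
    have diam: "diameter (ball x r) \<le> 2 * r"
    proof (cases "ball x r = {}")
      case True then show ?thesis using r by simp
    next
      case False
      have "(SUP p\<in>ball x r \<times> ball x r. case p of (a, b) \<Rightarrow> dist a b) \<le> 2 * r"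
      proof (rule cSUP_least)
        show "ball x r \<times> ball x r \<noteq> {}" using False by simp
        fix p assume "p \<in> ball x r \<times> ball x r"
        then obtain a b where p: "p = (a,b)" "dist x a < r" "dist x b < r" by auto
        have "dist a b \<le> dist x a + dist x b" by (metis dist_commute dist_triangle)
        then show "(case p of (a, b) \<Rightarrow> dist a b) \<le> 2 * r" using p by simp
      qed
      then show ?thesis using False by (simp add: diameter_def)
    qed
    have lrpos: "lam * r > 0" using lam r by simp
    have "(lam*r / 1) powr Q \<le> C0 * ml / m1"
      using C0(2)[OF xb[of 1] lrpos lr] by (simp add: ml_def m1_def)
    then have mlb: "(lam*r) powr Q * m1 / C0 \<le> ml" using m1 C0(1) by (simp add: field_simps)
    have "(I / ml) powr (1/Q) \<le> (I / ((lam*r) powr Q * m1 / C0)) powr (1/Q)"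
    proof -
      have p: "(lam*r) powr Q * m1 / C0 > 0" using m1 C0(1) lrpos by (intro divide_pos_pos mult_pos_pos) auto
      have "I / ml \<le> I / ((lam*r) powr Q * m1 / C0)"
        by (rule divide_left_mono[OF mlb I mult_pos_pos[OF mr(3) p]])
      then show ?thesis using I mr p Q by (intro powr_mono2) auto
    qed
    also have "\<dots> = I powr (1/Q) * (C0/m1) powr (1/Q) / (lam * r)"
    proof -
      have "I / ((lam*r) powr Q * m1 / C0) = I * (C0/m1) / (lam*r) powr Q"
        using m1 C0(1) by (simp add: field_simps)
      moreover have "((lam*r) powr Q) powr (1/Q) = lam * r" using Q lrpos by (simp add: powr_powr)
      ultimately show ?thesis using I m1 C0(1) lrpos
        by (simp add: powr_divide powr_mult)
    qed
    finally have D: "(I / ml) powr (1/Q) \<le> I powr (1/Q) * (C0/m1) powr (1/Q) / (lam * r)" .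
    have "Pv \<le> C * diameter (ball x r) * (I / ml) powr (1/Q)"
      using P[OF r] by (simp add: Pv_def mr_def I_def ml_def)
    also have "\<dots> \<le> C * (2 * r) * (I powr (1/Q) * (C0/m1) powr (1/Q) / (lam * r))"
    proof -
      have "0 \<le> diameter (ball x r)" using diameter_bounded_bound[of "ball x r" x x] r by simp
      then show ?thesis using C diam D r by (intro mult_mono) auto
    qed
    also have "\<dots> = (C * 2 * (C0 / m1) powr (1/Q) / lam) * I powr (1/Q)"
      using r lam by (simp add: field_simps)
    finally have "Pv \<le> (C * 2 * (C0 / m1) powr (1/Q) / lam) * I powr (1/Q)" .
    then have "(C0 * 2 powr Q) * Pv \<le> (C0 * 2 powr Q) * ((C * 2 * (C0 / m1) powr (1/Q) / lam) * I powr (1/Q))"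
      using C0(1) by (intro mult_left_mono) auto
    with B show "\<bar>avg M (ball x s) u - avg M (ball x r) u\<bar> \<le> K * (LINT y:ball x (lam*r)|M. g y powr Q) powr (1/Q)"
      by (simp add: K_def I_def mult.assoc)
  qed
qed

lemma exists_dyadic:
  fixes r :: real
  assumes r: "0 < r" "r < (1/2)^N"
  shows "\<exists>k\<ge>N. (1/2)^(Suc k) < r \<and> r \<le> (1/2)^k"
proof -
  define P where "P k \<longleftrightarrow> (1/2::real)^(Suc k) < r" for k
  obtain n where n: "(1/2::real)^n < r" using real_arch_pow_inv[of r "1/2::real"] r by auto
  have "P n" unfolding P_def using n r by simp
  define k where "k = (LEAST k. P k)"
  have Pk: "P k" unfolding k_def by (rule LeastI[of P n]) fact
  have kmin: "\<not> P m" if "m < k" for m using not_less_Least[of m P] that by (simp add: k_def)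
  have up: "r \<le> (1/2)^k"
  proof (cases k)
    case 0
    have "(1/2::real)^N \<le> 1" by (simp add: power_le_one)
    then show ?thesis using r 0 by simp
  next
    case (Suc m)
    then show ?thesis using kmin[of m] by (simp add: P_def)
  qed
  have "N \<le> k"
  proof (rule ccontr)
    assume "\<not> N \<le> k"
    then have "Suc k \<le> N" by simp
    then have "(1/2::real)^N \<le> (1/2)^(Suc k)" by (intro power_decreasing) auto
    then show False using Pk r by (simp add: P_def)
  qed
  then show ?thesis using Pk up by (auto simp: P_def)
qed

lemma limit_from_steps:
  fixes A \<Phi> :: "real \<Rightarrow> real" and K lam :: real
  assumes lam: "lam > 0"
    and summ: "summable (\<lambda>k. \<Phi> ((1/2)^k))"
    and step: "\<And>r s. 0 < r \<Longrightarrow> r/2 \<le> s \<Longrightarrow> s \<le> r \<Longrightarrow> lam*r \<le> 1 \<Longrightarrow> \<bar>A s - A r\<bar> \<le> K * \<Phi> r"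
  shows "\<exists>L. (A \<longlongrightarrow> L) (at_right 0)"
proof -
  define D where "D k = \<Phi> ((1/2)^k)" for k
  obtain k0 where k0: "(1/2::real)^k0 < 1/lam" using real_arch_pow_inv[of "1/lam" "1/2::real"] lam by auto
  have lk: "lam * (1/2)^k \<le> 1" if "k \<ge> k0" for k
  proof -
    have "(1/2::real)^k \<le> (1/2)^k0" by (rule power_decreasing[OF that]) auto
    then have "(1/2::real)^k \<le> 1/lam" using k0 by linarith
    then show ?thesis using lam by (simp add: field_simps)
  qed
  define a where "a k = A ((1/2)^k)" for k
  define d where "d k = a (Suc k) - a k" for k
  have dk: "norm (d k) \<le> K * D k" if "k \<ge> k0" for k
    using step[of "(1/2)^k" "(1/2)^(Suc k)"] lk[OF that] by (simp add: d_def a_def D_def)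
  have sd: "summable d"
    by (rule summable_comparison_test_ev[OF _ summable_mult[OF summ[folded D_def]]])
       (use dk in \<open>auto simp: eventually_sequentially\<close>)
  have aL: "a \<longlonglongrightarrow> a 0 + suminf d"
  proof -
    have "(\<lambda>n. a 0 + (\<Sum>k<n. d k)) \<longlonglongrightarrow> a 0 + suminf d"
      by (intro tendsto_add tendsto_const summable_LIMSEQ sd)
    moreover have "a 0 + (\<Sum>k<n. d k) = a n" for n
      unfolding d_def by (simp add: sum_lessThan_telescope)
    ultimately show ?thesis by simp
  qed
  define L where "L = a 0 + suminf d"
  have KD: "(\<lambda>k. K * D k) \<longlonglongrightarrow> 0"
    using tendsto_mult[OF tendsto_const[of K] summable_LIMSEQ_zero[OF summ[folded D_def]]] by simp
  have "(A \<longlongrightarrow> L) (at_right 0)"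
  proof (rule tendstoI)
    fix e :: real assume e: "e > 0"
    have e1: "eventually (\<lambda>k. dist (a k) L < e/2) sequentially" using tendstoD[OF aL[folded L_def], of "e/2"] e by simp
    have e2: "eventually (\<lambda>k. dist (K * D k) 0 < e/2) sequentially" using tendstoD[OF KD, of "e/2"] e by simp
    have e3: "eventually (\<lambda>k. k \<ge> k0) sequentially" by (rule eventually_ge_at_top)
    have "eventually (\<lambda>k. dist (a k) L < e/2 \<and> dist (K * D k) 0 < e/2 \<and> k \<ge> k0) sequentially"
      by (intro eventually_conj e1 e2 e3)
    then obtain N where N: "\<And>k. k \<ge> N \<Longrightarrow> dist (a k) L < e/2 \<and> dist (K * D k) 0 < e/2 \<and> k \<ge> k0"
      by (auto simp: eventually_sequentially)
    show "eventually (\<lambda>r. dist (A r) L < e) (at_right 0)"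
      unfolding eventually_at_right_field
    proof (intro exI[of _ "(1/2)^N"] conjI allI impI)
      show "(0::real) < (1/2)^N" by simp
      fix r :: real assume r: "0 < r" "r < (1/2)^N"
      then obtain k where k: "k \<ge> N" "(1/2)^(Suc k) < r" "r \<le> (1/2)^k"
        using exists_dyadic[OF r] by blast
      have Nk: "dist (a k) L < e/2" "dist (K * D k) 0 < e/2" "k \<ge> k0" using N[OF k(1)] by auto
      have "\<bar>A r - a k\<bar> \<le> K * D k"
        unfolding a_def D_def using step[of "(1/2)^k" r] k lk[OF Nk(3)] by simp
      moreover have "\<bar>A r - L\<bar> \<le> \<bar>A r - a k\<bar> + \<bar>a k - L\<bar>"
        using abs_triangle_ineq[of "A r - a k" "a k - L"] by simp
      ultimately show "dist (A r) L < e" using Nk by (simp add: dist_real_def)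
    qed
  qed
  then show ?thesis by blast
qed

lemma summable_good:
  fixes I :: "real \<Rightarrow> real" and Q \<epsilon> lam :: real
  assumes Q: "Q > 0" and eps: "\<epsilon> > 0" and lam: "lam > 0"
    and Inn: "\<And>\<rho>. I \<rho> \<ge> 0" and Imono: "\<And>\<rho> \<rho>'. 0 < \<rho> \<Longrightarrow> \<rho> \<le> \<rho>' \<Longrightarrow> I \<rho> \<le> I \<rho>'"
    and ev: "eventually (\<lambda>j. \<not> 2 powr (-(Q+\<epsilon>/2) * real j) \<le> I (lam * (1/2)^(2^j))) sequentially"
  shows "summable (\<lambda>k. I (lam * (1/2)^k) powr (1/Q))"
proof -
  define f where "f k = I (lam * (1/2)^k) powr (1/Q)" for k :: nat
  have mono: "f (Suc m) \<le> f m" for m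
  proof -
    have "I (lam * (1/2)^(Suc m)) \<le> I (lam * (1/2)^m)"
      using lam by (intro Imono) auto
    then show ?thesis unfolding f_def using Inn Q by (intro powr_mono2) auto
  qed
  have nn: "f n \<ge> 0" for n by (simp add: f_def)
  define q where "q = 2 powr (-(\<epsilon>/(2*Q)))"
  have q: "norm q < 1" unfolding q_def using powr_less_mono[of "-(\<epsilon>/(2*Q))" 0 2] eps Q by simp
  have "summable (\<lambda>j. 2^j * f (2^j))"
  proof (rule summable_comparison_test_ev[OF _ summable_geometric[OF q]])
    show "eventually (\<lambda>j. norm (2^j * f (2^j)) \<le> q^j) sequentially"
      using ev
    proof (rule eventually_mono)
      fix j :: nat assume j: "\<not> 2 powr (-(Q+\<epsilon>/2) * real j) \<le> I (lam * (1/2)^(2^j))"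
      have "f (2^j) \<le> (2 powr (-(Q+\<epsilon>/2) * real j)) powr (1/Q)"
        unfolding f_def using j Inn Q by (intro powr_mono2) auto
      also have "\<dots> = 2 powr (-(Q+\<epsilon>/2) * real j / Q)" by (simp add: powr_powr)
      finally have "2^j * f (2^j) \<le> 2 powr (real j) * 2 powr (-(Q+\<epsilon>/2) * real j / Q)"
        by (simp add: powr_realpow)
      also have "\<dots> = 2 powr (real j + (-(Q+\<epsilon>/2) * real j / Q))" by (simp add: powr_add)
      also have "real j + (-(Q+\<epsilon>/2) * real j / Q) = real j * (-(\<epsilon>/(2*Q)))"
        using Q by (simp add: field_simps)
      also have "2 powr (real j * (-(\<epsilon>/(2*Q)))) = q^j"
        unfolding q_def by (simp add: powr_power)
      finally show "norm (2^j * f (2^j)) \<le> q^j" using nn by simp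
    qed
  qed
  then have "summable f" using condensation_test[of f] mono nn by blast
  then show ?thesis by (simp add: f_def[abs_def])
qed

theorem mainTheorem2:
  fixes M :: "'a::metric_space measure" and Q \<epsilon> C lam :: real
    and u g :: "'a \<Rightarrow> real"
  assumes "Q > 1" and "\<epsilon> > 0"
    and "space M = UNIV" and "sets borel \<subseteq> sets M"
    and "Q_doubling Q M"
    and "\<And>x r. set_integrable M (ball x r) u"
    and "g \<in> borel_measurable M" and "\<And>x. g x \<ge> 0" and "integrable M (\<lambda>x. g x powr Q)"
    and "C > 0" and "lam \<ge> 1"
    and "\<And>x r. r > 0 \<Longrightarrow>
           (LINT y:ball x r|M. \<bar>u y - avg M (ball x r) u\<bar>) / measure M (ball x r)
           \<le> C * diameter (ball x r) *
             ((LINT y:ball x (lam * r)|M. g y powr Q) / measure M (ball x (lam * r))) powr (1 / Q)"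
  shows "\<exists>E. hausdorff_h (log_gauge Q \<epsilon>) E = 0 \<and>
           (\<forall>x \<in> UNIV - E. \<exists>L. ((\<lambda>r. avg M (ball x r) u) \<longlongrightarrow> L) (at_right 0))"
proof -
  have Q: "Q > 0" using assms(1) by simp
  have lam0: "lam > 0" using assms(11) by simp
  define E where "E = {x. \<exists>\<^sub>F j in sequentially. 2 powr (-(Q+\<epsilon>/2) * real j) \<le> (LINT y:ball x (lam * (1/2)^(2^j))|M. g y powr Q)}"
  have H: "hausdorff_h (log_gauge Q \<epsilon>) E = 0"
    unfolding E_def by (rule exceptional_null[OF assms(9) _ assms(4) Q assms(2) assms(11)]) simp
  have lim: "\<exists>L. ((\<lambda>r. avg M (ball x r) u) \<longlongrightarrow> L) (at_right 0)" if x: "x \<notin> E" for x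
  proof -
    define I where "I \<rho> = (LINT y:ball x \<rho>|M. g y powr Q)" for \<rho>
    have Inn: "I \<rho> \<ge> 0" for \<rho> unfolding I_def by (rule set_int_nonneg) simp
    have si: "set_integrable M (ball x \<rho>) (\<lambda>y. g y powr Q)" for \<rho>
    proof -
      have "ball x \<rho> \<in> sets M" using assms(4) by auto
      then show ?thesis unfolding set_integrable_def using integrable_mult_indicator[OF _ assms(9), of "ball x \<rho>"]
        by simp
    qed
    have Imono: "I \<rho> \<le> I \<rho>'" if "0 < \<rho>" "\<rho> \<le> \<rho>'" for \<rho> \<rho>'
      unfolding I_def
      by (rule set_integral_mono_set_nonneg[OF si]) (use that assms(4) in auto)
    have ev: "eventually (\<lambda>j. \<not> 2 powr (-(Q+\<epsilon>/2) * real j) \<le> I (lam * (1/2)^(2^j))) sequentially"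
      using x unfolding E_def I_def by (simp add: not_frequently)
    have summ: "summable (\<lambda>k. I (lam * (1/2)^k) powr (1/Q))"
      by (rule summable_good[OF Q assms(2) lam0 Inn Imono ev])
    obtain K where K: "\<And>r s. 0 < r \<Longrightarrow> r/2 \<le> s \<Longrightarrow> s \<le> r \<Longrightarrow> lam*r \<le> 1 \<Longrightarrow>
     \<bar>avg M (ball x s) u - avg M (ball x r) u\<bar> \<le> K * (LINT y:ball x (lam*r)|M. g y powr Q) powr (1/Q)"
      using step_bound[OF assms(4) assms(5) assms(6) Q assms(10) assms(11) assms(8) assms(12)] by blast
    show ?thesis
      by (rule limit_from_steps[where \<Phi>="\<lambda>r. I (lam * r) powr (1/Q)" and K=K and lam=lam, OF lam0])
         (use summ K in \<open>auto simp: I_def\<close>)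
  qed
  show ?thesis using H lim by blast
qed

end
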